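(* Let $N\ge2$ and $P\ge0$ be integers and let $\lambda$ be an element of a commutative ring. Then $\mathbb{HD}^P_{N+1}(\lambda)$ is the coefficient of the monomial $\prod_{i=0}^Nx_i^P$ in the polynomial \[ \Big(\lambda\sum_{i=0}^Nx_i^{N+1}-(N+1)\prod_{i=0}^Nx_i\Big)^{P}. \]
   Context: For natural numbers $P,M$ the Hasse--Dwork polynomial is \[ \mathbb{HD}^P_M(X)=(-M)^P\Big(1+M!\sum_{i=1}^{[P/M]}\binom{P}{M\times i}\Big(\frac{X}{-M}\Big)^{iM}\Big), \] where $M!\binom{P}{M\times i}=\binom{P}{i}\binom{P-i}{i}\binom{P-2i}{i}\cdots\binom{P-(M-1)i}{i}$; equivalently $\mathbb{HD}^P_M(X)=\sum_{i=0}^{[P/M]}M!\binom{P}{M\times i}(-M)^{P-iM}X^{iM}$, a polynomial with integer coefficients. *)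

theory Defs
  imports Main "HOL-Library.Poly_Mapping"
begin

text \<open>Multivariate polynomials in variables x_0, x_1, ... over a commutative ring 'a,
  represented as finitely supported maps from monomials (exponent vectors) to coefficients, with convolution multiplication.\<close>

type_synonym 'a mpoly = "(nat \<Rightarrow>\<^sub>0 nat) \<Rightarrow>\<^sub>0 'a"

definition mpVar :: "nat \<Rightarrow> 'a::comm_ring_1 mpoly" where
  "mpVar i = Poly_Mapping.single (Poly_Mapping.single i 1) 1"

definition mpConst :: "'a::comm_ring_1 \<Rightarrow> 'a mpoly" where
  "mpConst c = Poly_Mapping.single 0 c"

definition mpCoeff :: "'a::comm_ring_1 mpoly \<Rightarrow> (nat \<Rightarrow>\<^sub>0 nat) \<Rightarrow> 'a" where
  "mpCoeff p m = Poly_Mapping.lookup p m"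

text \<open>M! binom(P, M x i) = binom(P,i) binom(P-i,i) ... binom(P-(M-1)i, i).\<close>
definition multi_binom :: "nat \<Rightarrow> nat \<Rightarrow> nat \<Rightarrow> nat" where
  "multi_binom P M i = (\<Prod>j<M. (P - j * i) choose i)"

definition HD :: "nat \<Rightarrow> nat \<Rightarrow> 'a::comm_ring_1 \<Rightarrow> 'a" where
  "HD P M X = (\<Sum>i = 0..P div M.
      of_nat (multi_binom P M i) * (- of_nat M) ^ (P - i * M) * X ^ (i * M))"

end

theory Submission
  imports Defs
begin

lemma lookup_single_mult:
  "Poly_Mapping.lookup (Poly_Mapping.single u c * (p::'a::comm_ring_1 mpoly)) (u + v) = c * Poly_Mapping.lookup p v"
proof -
  have "Poly_Mapping.lookup (Poly_Mapping.single u c * p) (u + v)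
     = (\<Sum>l. Poly_Mapping.lookup (Poly_Mapping.single u c) l * (\<Sum>q. Poly_Mapping.lookup p q when u + v = l + q))"
    by (rule lookup_mult)
  also have "\<dots> = c * (\<Sum>q. Poly_Mapping.lookup p q when u + v = u + q)"
    by (simp add: lookup_single when_mult del: Sum_any.delta)
  also have "(\<Sum>q. Poly_Mapping.lookup p q when u + v = u + q) = (\<Sum>q. Poly_Mapping.lookup p q when v = q)"
    by simp
  also have "\<dots> = Poly_Mapping.lookup p v" by simp
  finally show ?thesis .
qed

definition nox :: "nat \<Rightarrow> 'a::comm_ring_1 mpoly \<Rightarrow> bool" where
  "nox n p = (\<forall>m\<in>Poly_Mapping.keys p. Poly_Mapping.lookup m n = 0)"

lemma nox_mult: "nox n p \<Longrightarrow> nox n q \<Longrightarrow> nox n (p * q)"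
  unfolding nox_def using keys_mult[of p q] by (force simp: lookup_add)

lemma nox_one: "nox n 1"
  unfolding nox_def by simp

lemma nox_power: "nox n p \<Longrightarrow> nox n (p ^ k)"
  by (induction k) (auto intro: nox_mult nox_one)

lemma nox_add: "nox n p \<Longrightarrow> nox n q \<Longrightarrow> nox n (p + q)"
  unfolding nox_def using keys_add[of p q] by blast

lemma nox_zero: "nox n 0"
  unfolding nox_def by simp

lemma nox_sum: "(\<And>i. i \<in> I \<Longrightarrow> nox n (f i)) \<Longrightarrow> nox n (sum f I)"
  by (induction I rule: infinite_finite_induct) (auto simp: nox_zero intro!: nox_add)

lemma nox_single: "Poly_Mapping.lookup m n = 0 \<Longrightarrow> nox n (Poly_Mapping.single m c)"
  unfolding nox_def by simp

lemma mpVar_power: "(mpVar i :: 'a::comm_ring_1 mpoly) ^ t = Poly_Mapping.single (Poly_Mapping.single i t) 1"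
  by (induction t) (auto simp: mpVar_def mult_single single_add[symmetric] add.commute)

lemma lookup_single_mult2:
  assumes "nox n p" "Poly_Mapping.lookup M n = 0"
  shows "Poly_Mapping.lookup (Poly_Mapping.single (Poly_Mapping.single n e') c * (p::'a::comm_ring_1 mpoly)) (M + Poly_Mapping.single n e)
    = (if e = e' then c * Poly_Mapping.lookup p M else 0)"
proof (cases "e = e'")
  case True
  then show ?thesis using lookup_single_mult[of "Poly_Mapping.single n e'" c p M]
    by (simp add: add.commute)
next
  case False
  have "Poly_Mapping.lookup (Poly_Mapping.single (Poly_Mapping.single n e') c * p) (M + Poly_Mapping.single n e)
     = (\<Sum>l. Poly_Mapping.lookup (Poly_Mapping.single (Poly_Mapping.single n e') c) l * (\<Sum>q. Poly_Mapping.lookup p q when M + Poly_Mapping.single n e = l + q))"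
    by (rule lookup_mult)
  also have "\<dots> = c * (\<Sum>q. Poly_Mapping.lookup p q when M + Poly_Mapping.single n e = Poly_Mapping.single n e' + q)"
    by (simp add: lookup_single when_mult del: Sum_any.delta)
  also have "(\<Sum>q. Poly_Mapping.lookup p q when M + Poly_Mapping.single n e = Poly_Mapping.single n e' + q) = 0"
  proof -
    have h: "(Poly_Mapping.lookup p q when M + Poly_Mapping.single n e = Poly_Mapping.single n e' + q) = 0" for q
    proof (cases "q \<in> Poly_Mapping.keys p")
      case True
      then have "Poly_Mapping.lookup q n = 0" using assms(1) by (simp add: nox_def)
      then have "M + Poly_Mapping.single n e \<noteq> Poly_Mapping.single n e' + q"
        using assms(2) False by (metis add_0 lookup_add lookup_single_eq add.right_neutral)
      then show ?thesis by simp
    next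
      case False
      then show ?thesis by (simp add: in_keys_iff)
    qed
    show ?thesis by (simp add: h)
  qed
  finally show ?thesis using False by simp
qed



lemma coefS:
  fixes d :: nat
  assumes d: "d \<ge> 1"
  shows "Poly_Mapping.lookup ((\<Sum>i<n. mpVar i ^ d :: 'a::comm_ring_1 mpoly) ^ k) (\<Sum>i<n. Poly_Mapping.single i e)
    = (if (n = 0 \<or> d dvd e) \<and> k = n * (e div d)
       then of_nat (\<Prod>j<n. (Suc j * (e div d)) choose (e div d)) else 0)"
proof (induction n arbitrary: k)
  case 0
  then show ?case by (cases k) (simp_all add: lookup_one when_def)
next
  case (Suc n)
  define S where "S = (\<Sum>i<n. mpVar i ^ d :: 'a mpoly)"
  define M where "M = (\<Sum>i<n. Poly_Mapping.single i e)"
  have noxS: "nox n (S ^ j)" for j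
    unfolding S_def by (rule nox_power, rule nox_sum) (simp add: mpVar_power nox_single lookup_single)
  have M0: "Poly_Mapping.lookup M n = 0"
    unfolding M_def by (simp add: lookup_sum lookup_single)
  have "(\<Sum>i<Suc n. mpVar i ^ d :: 'a mpoly) ^ k = (mpVar n ^ d + S) ^ k"
    by (simp add: S_def add.commute)
  also have "\<dots> = (\<Sum>t\<le>k. of_nat (k choose t) * (mpVar n ^ d) ^ t * S ^ (k - t))"
    by (rule binomial_ring)
  also have "\<dots> = (\<Sum>t\<le>k. Poly_Mapping.single (Poly_Mapping.single n (d * t)) (of_nat (k choose t)) * S ^ (k - t))"
  proof (rule sum.cong[OF refl])
    fix t
    have "(mpVar n ^ d) ^ t = (Poly_Mapping.single (Poly_Mapping.single n (d * t)) 1 :: 'a mpoly)"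
      by (subst power_mult[symmetric]) (rule mpVar_power)
    moreover have "(of_nat (k choose t) :: 'a mpoly) = Poly_Mapping.single 0 (of_nat (k choose t))"
      by simp
    ultimately show "of_nat (k choose t) * (mpVar n ^ d) ^ t * S ^ (k - t) = Poly_Mapping.single (Poly_Mapping.single n (d * t)) (of_nat (k choose t)) * S ^ (k - t)"
      by (simp only: mult_single) simp
  qed
  finally have eq: "(\<Sum>i<Suc n. mpVar i ^ d :: 'a mpoly) ^ k = \<dots>" .
  have "Poly_Mapping.lookup ((\<Sum>i<Suc n. mpVar i ^ d :: 'a mpoly) ^ k) (\<Sum>i<Suc n. Poly_Mapping.single i e)
      = (\<Sum>t\<le>k. Poly_Mapping.lookup (Poly_Mapping.single (Poly_Mapping.single n (d * t)) (of_nat (k choose t)) * S ^ (k - t)) (M + Poly_Mapping.single n e))"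
    by (simp only: eq lookup_sum) (simp add: M_def lookup_sum)
  also have "\<dots> = (\<Sum>t\<le>k. if e = d * t then of_nat (k choose t) * Poly_Mapping.lookup (S ^ (k - t)) M else 0)"
    by (simp add: lookup_single_mult2[OF noxS M0])
  finally have L: "Poly_Mapping.lookup ((\<Sum>i<Suc n. mpVar i ^ d :: 'a mpoly) ^ k) (\<Sum>i<Suc n. Poly_Mapping.single i e) = \<dots>" .
  show ?case
  proof (cases "d dvd e")
    case False
    then have "\<And>t. e \<noteq> d * t" by auto
    then show ?thesis using L False by simp
  next
    case True
    define a where "a = e div d"
    have ea: "e = d * a" using True a_def by simp
    have tiff: "e = d * t \<longleftrightarrow> t = a" for t using ea d by auto
    have "(\<Sum>t\<le>k. if e = d * t then of_nat (k choose t) * Poly_Mapping.lookup (S ^ (k - t)) M else 0)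
       = (\<Sum>t\<le>k. if t = a then of_nat (k choose t) * Poly_Mapping.lookup (S ^ (k - t)) M else (0::'a))"
      by (simp add: tiff)
    also have "\<dots> = (if a \<le> k then of_nat (k choose a) * Poly_Mapping.lookup (S ^ (k - a)) M else 0)"
      by (simp add: sum.delta')
    also have "\<dots> = (if k = Suc n * a then of_nat (\<Prod>j<Suc n. (Suc j * a) choose a) else 0)"
    proof (cases "a \<le> k")
      case True
      have IH: "Poly_Mapping.lookup (S ^ (k - a)) M = (if k - a = n * a then of_nat (\<Prod>j<n. (Suc j * a) choose a) else 0)"
        using Suc.IH[of "k - a"] unfolding S_def M_def a_def using \<open>d dvd e\<close> by simp
      have "k - a = n * a \<longleftrightarrow> k = Suc n * a" using True by auto
      then show ?thesis using True IH by (simp add: algebra_simps)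
    next
      case False
      then show ?thesis by auto
    qed
    finally show ?thesis using L True a_def by simp
  qed
qed



lemma choose_step:
  "(P choose (Suc n * a)) * ((Suc n * a) choose a) = (P choose (n * a)) * ((P - n * a) choose a)"
proof (cases "Suc n * a \<le> P")
  case True
  have "(P choose (Suc n * a)) * ((Suc n * a) choose (n * a)) = (P choose (n * a)) * ((P - n * a) choose (Suc n * a - n * a))"
    by (rule choose_mult) (use True in auto)
  moreover have "(Suc n * a) choose (n * a) = (Suc n * a) choose a"
    by (metis add_diff_cancel_right' binomial_symmetric le_add2 mult_Suc)
  ultimately show ?thesis by simp
next
  case False
  show ?thesis
  proof (cases "n * a \<le> P")
    case True
    then have "P - n * a < a" using False by simp
    then show ?thesis using False by (simp add: binomial_eq_0)
  next
    case False
    then show ?thesis using \<open>\<not> Suc n * a \<le> P\<close> by (simp add: binomial_eq_0)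
  qed
qed

lemma choose_prod:
  "(P choose (n * a)) * (\<Prod>j<n. (Suc j * a) choose a) = (\<Prod>j<n. (P - j * a) choose a)"
proof (induction n)
  case 0
  then show ?case by simp
next
  case (Suc n)
  have "(P choose (Suc n * a)) * (\<Prod>j<Suc n. (Suc j * a) choose a)
      = ((P choose (Suc n * a)) * ((Suc n * a) choose a)) * (\<Prod>j<n. (Suc j * a) choose a)"
    by (simp add: ac_simps)
  also have "\<dots> = ((P choose (n * a)) * (\<Prod>j<n. (Suc j * a) choose a)) * ((P - n * a) choose a)"
    by (simp only: choose_step) (simp add: ac_simps)
  also have "\<dots> = (\<Prod>j<Suc n. (P - j * a) choose a)"
    using Suc.IH by simp
  finally show ?case .
qed

lemma prod_single_one:
  "finite I \<Longrightarrow> (\<Prod>i\<in>I. Poly_Mapping.single (f i) (1::'a::comm_ring_1)) = Poly_Mapping.single (\<Sum>i\<in>I. f i) 1"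
  by (induction I rule: finite_induct) (auto simp: mult_single)



lemma single_power: "(Poly_Mapping.single (0::nat \<Rightarrow>\<^sub>0 nat) (a::'a::comm_ring_1)) ^ n = Poly_Mapping.single 0 (a ^ n)"
  by (induction n) (auto simp: mult_single)

theorem lemma3p8:
  fixes N P :: nat and lam :: "'a::comm_ring_1"
  assumes "N \<ge> 2"
  shows "HD P (N + 1) lam =
    mpCoeff ((mpConst lam * (\<Sum>i\<le>N. mpVar i ^ (N + 1))
              - of_nat (N + 1) * (\<Prod>i\<le>N. mpVar i)) ^ P)
            (\<Sum>i\<le>N. Poly_Mapping.single i P)"
proof -
  define d where "d = N + 1"
  have d1: "d \<ge> 1" and d0: "d > 0" by (simp_all add: d_def)
  define S where "S = (\<Sum>i\<le>N. mpVar i ^ d :: 'a mpoly)"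
  define Q where "Q = (\<Prod>i\<le>N. mpVar i :: 'a mpoly)"
  define T where "T = (\<lambda>j. (\<Sum>i\<le>N. Poly_Mapping.single i j) :: nat \<Rightarrow>\<^sub>0 nat)"
  define c where "c = (\<lambda>k. of_nat (P choose k) * lam ^ k * (- of_nat d) ^ (P - k) :: 'a)"
  define coef where "coef = (\<lambda>a. \<Prod>j<d. (Suc j * a) choose a)"
  have Qpow: "Q ^ j = Poly_Mapping.single (T j) 1" for j
  proof -
    have "Q ^ j = (\<Prod>i\<le>N. mpVar i ^ j)" unfolding Q_def by (simp add: prod_power_distrib)
    also have "\<dots> = (\<Prod>i\<le>N. Poly_Mapping.single (Poly_Mapping.single i j) (1::'a))"
      by (simp add: mpVar_power)
    also have "\<dots> = Poly_Mapping.single (T j) 1" unfolding T_def by (simp add: prod_single_one)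
    finally show ?thesis .
  qed
  have term_eq: "of_nat (P choose k) * (mpConst lam * S) ^ k * (- (of_nat d * Q)) ^ (P - k)
      = Poly_Mapping.single (T (P - k)) (c k) * S ^ k" for k
  proof -
    have "(mpConst lam * S) ^ k = Poly_Mapping.single 0 (lam ^ k) * S ^ k"
      by (simp add: power_mult_distrib mpConst_def single_power)
    moreover have "(- (of_nat d * Q)) ^ (P - k) = Poly_Mapping.single (T (P - k)) ((- of_nat d) ^ (P - k))"
    proof -
      have "- (of_nat d * Q) = Poly_Mapping.single 0 (- of_nat d) * Q"
        by (simp add: single_uminus)
      then have "(- (of_nat d * Q)) ^ (P - k) = Poly_Mapping.single 0 ((- of_nat d) ^ (P - k)) * Q ^ (P - k)"
        by (simp add: power_mult_distrib single_power)
      then show ?thesis by (simp add: Qpow mult_single)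
    qed
    moreover have "(of_nat (P choose k) :: 'a mpoly) = Poly_Mapping.single 0 (of_nat (P choose k))"
      by simp
    ultimately show ?thesis
      unfolding c_def by (simp only: ac_simps mult_single) (simp add: ac_simps mult_single)
  qed
  have "(mpConst lam * S - of_nat d * Q) ^ P = (mpConst lam * S + - (of_nat d * Q)) ^ P"
    by simp
  also have "\<dots> = (\<Sum>k\<le>P. of_nat (P choose k) * (mpConst lam * S) ^ k * (- (of_nat d * Q)) ^ (P - k))"
    by (rule binomial_ring)
  also have "\<dots> = (\<Sum>k\<le>P. Poly_Mapping.single (T (P - k)) (c k) * S ^ k)"
    by (simp add: term_eq)
  finally have expand: "(mpConst lam * S - of_nat d * Q) ^ P = \<dots>" .
  have TP: "T P = T (P - k) + T k" if "k \<le> P" for k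
    unfolding T_def using that by (simp add: sum.distrib[symmetric] single_add[symmetric])
  have Sk: "Poly_Mapping.lookup (S ^ k) (T k) = (if d dvd k then of_nat (coef (k div d)) else 0)" for k
  proof -
    have "S = (\<Sum>i<d. mpVar i ^ d)" unfolding S_def d_def using lessThan_Suc_atMost by simp
    moreover have "T k = (\<Sum>i<d. Poly_Mapping.single i k)" unfolding T_def d_def using lessThan_Suc_atMost by simp
    ultimately show ?thesis using coefS[OF d1, of d k k, where 'a='a] d0 unfolding coef_def
      by auto
  qed
  have "mpCoeff ((mpConst lam * S - of_nat d * Q) ^ P) (T P)
      = (\<Sum>k\<le>P. Poly_Mapping.lookup (Poly_Mapping.single (T (P - k)) (c k) * S ^ k) (T P))"
    by (simp add: mpCoeff_def expand lookup_sum)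
  also have "\<dots> = (\<Sum>k\<le>P. c k * Poly_Mapping.lookup (S ^ k) (T k))"
    by (rule sum.cong[OF refl]) (simp add: TP lookup_single_mult)
  also have "\<dots> = (\<Sum>k\<le>P. if d dvd k then c k * of_nat (coef (k div d)) else 0)"
    by (rule sum.cong[OF refl]) (simp add: Sk)
  also have "\<dots> = (\<Sum>k\<in>{k\<in>{..P}. d dvd k}. c k * of_nat (coef (k div d)))"
    by (simp add: sum.inter_filter[symmetric])
  also have "{k\<in>{..P}. d dvd k} = (\<lambda>i. d * i) ` {0..P div d}"
  proof
    show "{k\<in>{..P}. d dvd k} \<subseteq> (\<lambda>i. d * i) ` {0..P div d}"
    proof
      fix k assume "k \<in> {k\<in>{..P}. d dvd k}"
      then obtain i where "k = d * i" "k \<le> P" by auto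
      then have "i \<in> {0..P div d}" using d0
        by (simp add: less_eq_div_iff_mult_less_eq mult.commute)
      then show "k \<in> (\<lambda>i. d * i) ` {0..P div d}" using \<open>k = d * i\<close> by auto
    qed
  next
    show "(\<lambda>i. d * i) ` {0..P div d} \<subseteq> {k\<in>{..P}. d dvd k}"
      using d0 by (auto simp: less_eq_div_iff_mult_less_eq mult.commute)
  qed
  also have "(\<Sum>k\<in>(\<lambda>i. d * i) ` {0..P div d}. c k * of_nat (coef (k div d)))
      = (\<Sum>i=0..P div d. c (d * i) * of_nat (coef i))"
    using d0 by (subst sum.reindex) (auto simp: inj_on_def)
  also have "\<dots> = HD P d lam"
    unfolding HD_def
  proof (rule sum.cong[OF refl])
    fix i
    have "multi_binom P d i = (P choose (d * i)) * coef i"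
      unfolding multi_binom_def coef_def by (rule choose_prod[symmetric])
    then show "c (d * i) * of_nat (coef i) = of_nat (multi_binom P d i) * (- of_nat d) ^ (P - i * d) * lam ^ (i * d)"
      unfolding c_def by (simp add: ac_simps)
  qed
  finally show ?thesis unfolding S_def Q_def T_def d_def by simp
qed


end
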